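(* Let $p,q\in\mathbb{N}$ with $2\le q\le \frac p2-1$. If $\overline{\xi_f}(E_{p/(q-1)})=\frac{p}{q-1}$ and $\overline{\xi_f}(E_{p/(q+1)})=\frac{p}{q+1}$, then $\overline{\xi_f}(E_{p/q})=\frac pq$.
   Context: For $p,k\in\mathbb{N}$ with $p/k\ge2$, the fraction graph $E_{p/k}$ has vertex set $\mathbb{Z}_p=\{0,\dots,p-1\}$, and distinct vertices $i,j$ are adjacent iff their cyclic distance $\min(|i-j|,p-|i-j|)$ is strictly less than $k$ (the graph depends on the pair $(p,k)$, e.g. $E_{p/(q-1)}$ uses threshold $q-1$ on $\mathbb{Z}_p$). For a graph $G$, $\overline{\xi_f}(G)$ (complement of the projective rank) is the infimum of $d/r$ over all $d,r\in\mathbb{N}$ for which there is an assignment of $r$-dimensional subspaces $W_v\le\mathbb{C}^d$ to the vertices of $G$ such that distinct non-adjacent vertices receive orthogonal subspaces. *)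

theory Defs
  imports "Jordan_Normal_Form.VS_Connect" "Jordan_Normal_Form.Conjugate"
begin

text \<open>Cyclic distance on Z_p (vertices are represented by 0..<p).\<close>
definition cyc_dist :: "nat \<Rightarrow> nat \<Rightarrow> nat \<Rightarrow> nat" where
  "cyc_dist p i j = min (nat \<bar>int i - int j\<bar>) (p - nat \<bar>int i - int j\<bar>)"

definition frac_verts :: "nat \<Rightarrow> nat set" where
  "frac_verts p = {0..<p}"

definition frac_adj :: "nat \<Rightarrow> nat \<Rightarrow> nat \<Rightarrow> nat \<Rightarrow> bool" where
  "frac_adj p k i j \<longleftrightarrow> i \<noteq> j \<and> cyc_dist p i j < k"

definition is_subspace_of_dim :: "nat \<Rightarrow> nat \<Rightarrow> complex vec set \<Rightarrow> bool" where
  "is_subspace_of_dim d r W \<longleftrightarrow>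
     subspace class_ring W (module_vec TYPE(complex) d) \<and>
     vectorspace.dim class_ring ((module_vec TYPE(complex) d)\<lparr>carrier := W\<rparr>) = r"

definition comp_proj_rep ::
  "'v set \<Rightarrow> ('v \<Rightarrow> 'v \<Rightarrow> bool) \<Rightarrow> nat \<Rightarrow> nat \<Rightarrow> bool" where
  "comp_proj_rep V adj d r \<longleftrightarrow>
     (\<exists>W :: 'v \<Rightarrow> complex vec set.
        (\<forall>v\<in>V. is_subspace_of_dim d r (W v)) \<and>
        (\<forall>u\<in>V. \<forall>v\<in>V. u \<noteq> v \<and> \<not> adj u v \<longrightarrow>
            (\<forall>x\<in>W u. \<forall>y\<in>W v. x \<bullet>c y = 0)))"

text \<open>Complement of projective rank: infimum of d/r over representations (d, r \<in> N, r \<ge> 1).\<close>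
definition xi_f_bar :: "'v set \<Rightarrow> ('v \<Rightarrow> 'v \<Rightarrow> bool) \<Rightarrow> real" where
  "xi_f_bar V adj = Inf {real d / real r | d r. d \<ge> 1 \<and> r \<ge> 1 \<and> comp_proj_rep V adj d r}"

end

theory Submission
  imports Defs
begin
context vec_space begin

lemma subspace_iff: "subspace class_ring W V \<longleftrightarrow> W \<subseteq> carrier_vec n \<and> 0\<^sub>v n \<in> W \<and> (\<forall>x\<in>W. \<forall>y\<in>W. x + y \<in> W) \<and> (\<forall>c x. x \<in> W \<longrightarrow> c \<cdot>\<^sub>v x \<in> W)"
  unfolding subspace_def submodule_def
  using vectorspace_axioms module_axioms by auto

lemma subspace_sub: "subspace class_ring W V \<Longrightarrow> W \<subseteq> carrier_vec n"
  using subspace_iff by auto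

lemma li_fin: "A \<subseteq> carrier_vec n \<Longrightarrow> lin_indpt A \<Longrightarrow> finite A \<and> card A \<le> n"
  using li_le_dim[OF fin_dim] dim_is_n by auto

lemma extend_basis:
  assumes W: "subspace class_ring W V" and A: "A \<subseteq> W" "lin_indpt A"
  shows "\<exists>B. A \<subseteq> B \<and> B \<subseteq> W \<and> finite B \<and> lin_indpt B \<and> span B = W"
proof -
  have Wc: "W \<subseteq> carrier_vec n" using W subspace_iff by auto
  let ?P = "\<lambda>S. A \<subseteq> S \<and> S \<subseteq> W \<and> lin_indpt S"
  have "\<exists>B. finite B \<and> maximal B ?P"
    apply (rule maximal_exists[where N=n and B=A])
    using li_fin Wc A by auto
  then obtain B where fB: "finite B" and mB: "maximal B ?P" by auto
  hence PB: "?P B" unfolding maximal_def by auto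
  have Bc: "B \<subseteq> carrier_vec n" using PB Wc by auto
  have sub: "submodule class_ring W V" using W unfolding subspace_def by auto
  have "span B \<subseteq> W" using span_is_subset[OF _ sub] PB by auto
  moreover have "W \<subseteq> span B"
  proof
    fix w assume w: "w \<in> W"
    show "w \<in> span B"
    proof (rule ccontr)
      assume nw: "w \<notin> span B"
      have "w \<notin> B" using nw in_own_span[OF Bc] by auto
      hence "lin_indpt (B \<union> {w})" using lin_dep_iff_in_span[OF Bc _ _ \<open>w \<notin> B\<close>] PB nw w Wc by auto
      then have "?P (B \<union> {w})" using PB w by auto
      hence "B \<union> {w} = B" using mB unfolding maximal_def by blast
      thus False using \<open>w \<notin> B\<close> by auto
    qed
  qed
  ultimately show ?thesis using PB fB by auto
qed

lemma dim_span:
  assumes Ac: "A \<subseteq> carrier_vec n" and li: "lin_indpt A"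
  shows "vectorspace.dim class_ring (vs (span A)) = card A"
proof -
  have fA: "finite A" using li_fin[OF Ac li] by auto
  have ss: "subspace class_ring (span A) V" using span_is_subspace Ac by auto
  interpret W: vectorspace class_ring "vs (span A)" using subspace_is_vs[OF ss] .
  have sm: "submodule class_ring (span A) V" using span_is_submodule Ac by auto
  have AsA: "A \<subseteq> span A" using in_own_span Ac by auto
  have "W.basis A"
    unfolding W.basis_def
    using span_li_not_depend[OF AsA sm] li AsA by auto
  thus ?thesis using W.dim_basis fA by auto
qed

definition sdim where "sdim W = vectorspace.dim class_ring (vs W)"

lemma basis_exists:
  assumes W: "subspace class_ring W V"
  shows "\<exists>B. B \<subseteq> W \<and> finite B \<and> lin_indpt B \<and> span B = W \<and> card B = sdim W"
proof -
  have "lin_indpt {}" unfolding lin_dep_def by auto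
  then obtain B where B: "B \<subseteq> W \<and> finite B \<and> lin_indpt B \<and> span B = W"
    using extend_basis[OF W, of "{}"] by auto
  then have "card B = sdim W" unfolding sdim_def
    using dim_span[of B] subspace_sub[OF W] by auto
  thus ?thesis using B by auto
qed

lemma dim_ge:
  assumes W: "subspace class_ring W V" and A: "A \<subseteq> W" "lin_indpt A"
  shows "finite A" "card A \<le> sdim W"
proof -
  obtain B where B: "A \<subseteq> B \<and> B \<subseteq> W \<and> finite B \<and> lin_indpt B \<and> span B = W"
    using extend_basis[OF W A] by auto
  then have "card B = sdim W" unfolding sdim_def
    using dim_span[of B] subspace_sub[OF W] by auto
  thus "finite A" "card A \<le> sdim W" using B card_mono finite_subset by metis+
qed

lemma sdim_mono:
  assumes U: "subspace class_ring U V" and W: "subspace class_ring W V" and UW: "U \<subseteq> W"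
  shows "sdim U \<le> sdim W"
proof -
  obtain B where B: "B \<subseteq> U \<and> finite B \<and> lin_indpt B \<and> span B = U \<and> card B = sdim U"
    using basis_exists[OF U] by auto
  thus ?thesis using dim_ge[OF W, of B] UW by auto
qed

lemma sub_of_dim:
  assumes W: "subspace class_ring W V" and k: "k \<le> sdim W"
  shows "\<exists>U. subspace class_ring U V \<and> U \<subseteq> W \<and> sdim U = k"
proof -
  obtain B where B: "B \<subseteq> W \<and> finite B \<and> lin_indpt B \<and> span B = W \<and> card B = sdim W"
    using basis_exists[OF W] by auto
  obtain C where C: "C \<subseteq> B" "card C = k" using obtain_subset_with_card_n[of k B] B k by auto
  have Wc: "W \<subseteq> carrier_vec n" using subspace_sub[OF W] .
  have Cc: "C \<subseteq> carrier_vec n" using C B Wc by auto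
  have liC: "lin_indpt C" using subset_li_is_li[of B C] B C Wc by auto
  have sm: "submodule class_ring W V" using W unfolding subspace_def by auto
  have "C \<subseteq> W" using C B by auto
  hence "span C \<subseteq> W" using span_is_subset[OF _ sm] by blast
  moreover have "sdim (span C) = k" unfolding sdim_def using dim_span[OF Cc liC] C by auto
  ultimately show ?thesis using span_is_subspace[OF Cc] by auto
qed

end

context vec_space begin

lemma span_disj:
  assumes Ac: "A \<subseteq> carrier_vec n" and Bc: "B \<subseteq> carrier_vec n" and li: "lin_indpt (A \<union> B)" and dis: "A \<inter> B = {}"
  shows "span A \<inter> span B \<subseteq> {0\<^sub>v n}"
proof
  fix v assume v: "v \<in> span A \<inter> span B"
  then obtain a A' where A': "A' \<subseteq> A" "finite A'" "v = lincomb a A'"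
    unfolding span_def by blast
  obtain b B' where B': "B' \<subseteq> B" "finite B'" "v = lincomb b B'"
    using v unfolding span_def by blast
  let ?c = "\<lambda>w. if w \<in> A' then a w else - b w"
  have dis': "A' \<inter> B' = {}" using A' B' dis by auto
  have c1: "lincomb ?c A' = v" using A' Ac by (auto intro!: lincomb_cong)
  have "lincomb ?c B' = lincomb (\<lambda>w. (-1) * b w) B'" using B' Bc dis' by (auto intro!: lincomb_cong)
  also have "\<dots> = (-1) \<cdot>\<^sub>v v" using lincomb_smult[where A=B' and a=b and c="-1"] B' Bc by auto
  finally have c2: "lincomb ?c B' = (-1) \<cdot>\<^sub>v v" .
  have vc: "v \<in> carrier_vec n" using A' Ac lincomb_closed by auto
  have "lincomb ?c (A' \<union> B') = lincomb ?c A' + lincomb ?c B'"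
    using lincomb_union[of A' B' ?c] A' B' Ac Bc dis' by auto
  also have "\<dots> = 0\<^sub>v n" using c1 c2 vc by auto
  finally have "?c \<in> A' \<union> B' \<rightarrow> {0}"
    using not_lindepD[OF li, of "A' \<union> B'" ?c] A' B' by auto
  hence "lincomb ?c A' = 0\<^sub>v n" using lincomb_zero[of A' ?c] A' Ac by auto
  thus "v \<in> {0\<^sub>v n}" using c1 by auto
qed

lemma li_union:
  assumes Ac: "A \<subseteq> carrier_vec n" and Bc: "B \<subseteq> carrier_vec n" and liA: "lin_indpt A" and liB: "lin_indpt B"
    and dis: "span A \<inter> span B \<subseteq> {0\<^sub>v n}"
  shows "lin_indpt (A \<union> B)" "A \<inter> B = {}"
proof -
  have fB: "finite B" using li_fin Bc liB by auto
  have U: "(UNIV::'a set) \<noteq> {0}" by (metis UNIV_I singletonD zero_neq_one)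
  have z: "0\<^sub>v n \<notin> B" using zero_nin_lin_indpt[OF _ liB] Bc U by auto
  show AB: "A \<inter> B = {}"
  proof (rule ccontr)
    assume "A \<inter> B \<noteq> {}"
    then obtain x where "x \<in> A" "x \<in> B" by auto
    hence "x \<in> span A \<inter> span B" using in_own_span Ac Bc by blast
    hence "x = 0\<^sub>v n" using dis by auto
    thus False using z \<open>x \<in> B\<close> by auto
  qed
  have "\<And>F. finite F \<Longrightarrow> F \<subseteq> B \<Longrightarrow> lin_indpt (A \<union> F)"
  proof -
    fix F :: "'a vec set" assume "finite F" "F \<subseteq> B"
    then show "lin_indpt (A \<union> F)"
    proof (induction F rule: finite_induct)
      case empty
      then show ?case using liA by auto
    next
      case (insert b F)
      have bB: "b \<in> B" "F \<subseteq> B" using insert by auto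
      have bc: "b \<in> carrier_vec n" using bB Bc by auto
      have Fc: "F \<subseteq> carrier_vec n" using bB Bc by auto
      have AFc: "A \<union> F \<subseteq> carrier_vec n" using Ac Fc by auto
      have bnA: "b \<notin> A" using AB bB by auto
      have liF: "lin_indpt F" using subset_li_is_li[OF liB bB(2)] .
      have nspan: "b \<notin> span (A \<union> F)"
      proof
        assume "b \<in> span (A \<union> F)"
        then obtain x y where xy: "x \<in> span A" "y \<in> span F" "b = x + y"
          using span_union_is_sum[OF Ac Fc] unfolding submodule_sum_def by auto
        have xc: "x \<in> carrier_vec n" using xy(1) span_closed Ac by auto
        have yc: "y \<in> carrier_vec n" using xy(2) span_closed Fc by auto
        have x_eq: "x = b + (-1) \<cdot>\<^sub>v y" using xy(3) xc yc by auto
        have smB: "submodule class_ring (span B) V" using span_is_submodule Bc by auto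
        have "span F \<subseteq> span B" using span_is_monotone bB(2) Bc by auto
        hence "y \<in> span B" using xy by auto
        moreover have "b \<in> span B" using in_own_span Bc bB by auto
        ultimately have "x \<in> span B" using x_eq smB unfolding submodule_def by auto
        hence "x = 0\<^sub>v n" using dis xy by auto
        hence "b \<in> span F" using xy yc by auto
        hence "lin_dep (F \<union> {b})" using lin_dep_iff_in_span[OF Fc liF bc] insert by auto
        moreover have "F \<union> {b} \<subseteq> B" using bB by auto
        ultimately have "lin_dep B" using supset_ld_is_ld Bc by blast
        thus False using liB by auto
      qed
      have "lin_indpt ((A \<union> F) \<union> {b})"
        using lin_dep_iff_in_span[OF AFc insert.IH bc] nspan bnA insert by auto
      thus ?case by (metis Un_insert_right sup_bot.right_neutral)
    qed
  qed
  thus "lin_indpt (A \<union> B)" using fB by auto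
qed

end

context vec_space begin

lemma subspace_inter:
  assumes "subspace class_ring U V" "subspace class_ring W V"
  shows "subspace class_ring (U \<inter> W) V"
  using assms unfolding subspace_iff by auto

lemma grassmann:
  assumes U: "subspace class_ring U V" and W: "subspace class_ring W V"
  shows "sdim U + sdim W \<le> sdim (subspace_sum U W) + sdim (U \<inter> W)"
proof -
  have S: "subspace class_ring (U \<inter> W) V" using subspace_inter[OF U W] .
  have Uc: "U \<subseteq> carrier_vec n" using subspace_sub[OF U] .
  have Wc: "W \<subseteq> carrier_vec n" using subspace_sub[OF W] .
  obtain BS where BS: "BS \<subseteq> U \<inter> W" "finite BS" "lin_indpt BS" "span BS = U \<inter> W" "card BS = sdim (U \<inter> W)"
    using basis_exists[OF S] by auto
  obtain BU where BU: "BS \<subseteq> BU" "BU \<subseteq> U" "finite BU" "lin_indpt BU" "span BU = U"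
    using extend_basis[OF U, of BS] BS by auto
  have cBU: "card BU = sdim U" unfolding sdim_def using dim_span[of BU] BU Uc by auto
  obtain BW where BW: "BW \<subseteq> W" "finite BW" "lin_indpt BW" "span BW = W" "card BW = sdim W"
    using basis_exists[OF W] by auto
  define X where "X = BU - BS"
  have Xc: "X \<subseteq> carrier_vec n" using BU Uc X_def by auto
  have BSc: "BS \<subseteq> carrier_vec n" using BS Uc by auto
  have BWc: "BW \<subseteq> carrier_vec n" using BW Wc by auto
  have liX: "lin_indpt X" using subset_li_is_li[OF BU(4)] X_def by auto
  have BSX: "BS \<union> X = BU" "BS \<inter> X = {}" using BU X_def by auto
  have d1: "span BS \<inter> span X \<subseteq> {0\<^sub>v n}" using span_disj[OF BSc Xc] BSX BU by auto
  have smU: "submodule class_ring U V" using U unfolding subspace_def by auto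
  have "X \<subseteq> U" using X_def BU by auto
  hence "span X \<subseteq> U" using span_is_subset[OF _ smU] by blast
  hence d2: "span X \<inter> span BW \<subseteq> {0\<^sub>v n}" using d1 BS BW by auto
  have li: "lin_indpt (X \<union> BW)" and dis: "X \<inter> BW = {}" using li_union[OF Xc BWc liX BW(3) d2] by auto
  have sum: "subspace class_ring (subspace_sum U W) V" using sum_is_subspace[OF U W] .
  have "U \<subseteq> subspace_sum U W" using in_sum_vs[OF U W] .
  moreover have "W \<subseteq> subspace_sum U W" using in_sum_vs[OF W U] vsum_comm[OF U W] by auto
  ultimately have "X \<union> BW \<subseteq> subspace_sum U W" using X_def BU BW by auto
  hence "card (X \<union> BW) \<le> sdim (subspace_sum U W)" using dim_ge[OF sum _ li] by auto
  moreover have "card (X \<union> BW) = card X + card BW" using card_Un_disjoint[OF _ BW(2) dis] X_def BU by auto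
  moreover have "card X = card BU - card BS" unfolding X_def using card_Diff_subset[OF BS(2) BU(1)] .
  moreover have "card BS \<le> card BU" using card_mono[OF BU(3) BU(1)] .
  ultimately show ?thesis using cBU BW BS by linarith
qed

end

definition blk :: "nat \<Rightarrow> nat \<Rightarrow> 'a vec \<Rightarrow> 'a vec" where
  "blk d s v = vec d (\<lambda>k. v $ (s*d + k))"

definition emb :: "nat \<Rightarrow> nat \<Rightarrow> nat \<Rightarrow> 'a::zero vec \<Rightarrow> 'a vec" where
  "emb p d s x = vec (p*d) (\<lambda>k. if k div d = s then x $ (k mod d) else 0)"

lemma blk_carrier[simp]: "blk d s v \<in> carrier_vec d" "dim_vec (blk d s v) = d"
  unfolding blk_def by auto

lemma index_blk[simp]: "k < d \<Longrightarrow> blk d s v $ k = v $ (s*d+k)"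
  unfolding blk_def by auto

lemma emb_carrier[simp]: "emb p d s x \<in> carrier_vec (p*d)" "dim_vec (emb p d s x) = p*d"
  unfolding emb_def by auto

lemma index_emb[simp]: "k < p*d \<Longrightarrow> emb p d s x $ k = (if k div d = s then x $ (k mod d) else 0)"
  unfolding emb_def by auto

lemma blk_idx: fixes t p k d :: nat assumes "t < p" "k < d" shows "t*d+k < p*d" "(t*d+k) div d = t" "(t*d+k) mod d = k"
proof -
  have "t*d + k < t*d + d" using assms by auto
  also have "\<dots> = (t+1)*d" by auto
  also have "\<dots> \<le> p*d" using assms by (intro mult_right_mono) auto
  finally show "t*d+k < p*d" .
  show "(t*d+k) div d = t" "(t*d+k) mod d = k" using assms by auto
qed

lemma blk_emb: assumes "t < p" "x \<in> carrier_vec d"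
  shows "blk d t (emb p d s x) = (if t = s then x else 0\<^sub>v d)"
  by (rule eq_vecI, insert assms blk_idx[OF assms(1)], auto)

lemma blk_add: assumes "v \<in> carrier_vec (p*d)" "w \<in> carrier_vec (p*d)" "s < p"
  shows "blk d s (v + w) = blk d s v + blk d s w"
  by (rule eq_vecI, insert assms blk_idx[OF assms(3)], auto)

lemma blk_smult: assumes "v \<in> carrier_vec (p*d)" "s < p"
  shows "blk d s (c \<cdot>\<^sub>v v) = c \<cdot>\<^sub>v blk d s v"
  by (rule eq_vecI, insert assms blk_idx[OF assms(2)], auto)

lemma blk_zero: assumes "s < p" shows "blk d s (0\<^sub>v (p*d) :: 'a::zero vec) = 0\<^sub>v d"
  by (rule eq_vecI, insert assms blk_idx[OF assms(1)], auto)

lemma blocks_eq: assumes "v \<in> carrier_vec (p*d)" "w \<in> carrier_vec (p*d)" "\<And>s. s < p \<Longrightarrow> blk d s v = blk d s w"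
  shows "v = w"
proof (rule eq_vecI)
  show "dim_vec v = dim_vec w" using assms by auto
  fix k assume "k < dim_vec w"
  hence k: "k < p*d" using assms by auto
  hence d: "d > 0" by (cases d) auto
  define s where "s = k div d"
  have s: "s < p" using k d unfolding s_def by (simp add: less_mult_imp_div_less)
  have km: "k mod d < d" using d by auto
  have kk: "k = s*d + k mod d" unfolding s_def by auto
  have "blk d s v $ (k mod d) = blk d s w $ (k mod d)" using assms(3)[OF s] by auto
  thus "v $ k = w $ k" using km kk by (metis index_blk)
qed

lemma sum_blocks: "(\<Sum>k<p*d. f k) = (\<Sum>s<p. \<Sum>j<d. f (s*d+j))" for p d :: nat
proof -
  have "(\<Sum>j<d. f (s*d+j)) = sum f {s*d..<s*d+d}" for s
  proof -
    have "sum f {0 + s*d..<d + s*d} = (\<Sum>j\<in>{0..<d}. f (j + s*d))"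
      by (rule sum.shift_bounds_nat_ivl)
    thus ?thesis by (simp add: atLeast0LessThan add.commute)
  qed
  thus ?thesis using sum.nat_group[of f d p] by simp
qed

locale two_spaces = fixes f_ty :: "'a::field itself" and p d :: nat
begin
sublocale D: vec_space f_ty d .
sublocale N: vec_space f_ty "p*d" .

definition BSum :: "(nat \<Rightarrow> 'a vec set) \<Rightarrow> 'a vec set" where
  "BSum U = {v \<in> carrier_vec (p*d). \<forall>s<p. blk d s v \<in> U s}"

definition Zt :: "(nat \<Rightarrow> 'a vec set) \<Rightarrow> nat \<Rightarrow> 'a vec set" where
  "Zt U t = {v \<in> carrier_vec (p*d). \<forall>s<p. (s < t \<longrightarrow> blk d s v \<in> U s) \<and> (t \<le> s \<longrightarrow> blk d s v = 0\<^sub>v d)}"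

definition Yt :: "nat \<Rightarrow> 'a vec set" where
  "Yt t = {v \<in> carrier_vec (p*d). \<forall>s<p. s \<noteq> t \<longrightarrow> blk d s v = 0\<^sub>v d}"

lemma U_props:
  assumes U: "subspace class_ring W D.V"
  shows "0\<^sub>v d \<in> W" "\<And>x y. x \<in> W \<Longrightarrow> y \<in> W \<Longrightarrow> x + y \<in> W"
    "\<And>c x. x \<in> W \<Longrightarrow> c \<cdot>\<^sub>v x \<in> W"
  using U unfolding D.subspace_iff by auto

lemma Zt_subspace:
  assumes U: "\<And>s. s < p \<Longrightarrow> subspace class_ring (U s) D.V"
  shows "subspace class_ring (Zt U t) N.V"
  unfolding N.subspace_iff
proof (intro conjI ballI allI impI)
  show "Zt U t \<subseteq> carrier_vec (p*d)" unfolding Zt_def by auto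
  have "\<forall>s<p. blk d s (0\<^sub>v (p*d)) = 0\<^sub>v d" using blk_zero by blast
  moreover have "\<forall>s<p. 0\<^sub>v d \<in> U s" using U_props(1)[OF U] by blast
  ultimately show "0\<^sub>v (p*d) \<in> Zt U t" unfolding Zt_def by auto
  fix x y assume x: "x \<in> Zt U t" and y: "y \<in> Zt U t"
  have xc: "x \<in> carrier_vec (p*d)" and yc: "y \<in> carrier_vec (p*d)" using x y unfolding Zt_def by auto
  have "blk d s (x + y) \<in> U s" if "s < p" "s < t" for s
    using blk_add[OF xc yc \<open>s < p\<close>] U_props(2)[OF U[OF \<open>s < p\<close>]] x y that unfolding Zt_def by auto
  moreover have "blk d s (x + y) = 0\<^sub>v d" if "s < p" "t \<le> s" for s
    using blk_add[OF xc yc \<open>s < p\<close>] x y that unfolding Zt_def by auto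
  ultimately show "x + y \<in> Zt U t" unfolding Zt_def using xc yc by auto
next
  fix c x assume x: "x \<in> Zt U t"
  have xc: "x \<in> carrier_vec (p*d)" using x unfolding Zt_def by auto
  have "blk d s (c \<cdot>\<^sub>v x) \<in> U s" if "s < p" "s < t" for s
    using blk_smult[OF xc \<open>s < p\<close>] U_props(3)[OF U[OF \<open>s < p\<close>]] x that unfolding Zt_def by auto
  moreover have "blk d s (c \<cdot>\<^sub>v x) = 0\<^sub>v d" if "s < p" "t \<le> s" for s
    using blk_smult[OF xc \<open>s < p\<close>] x that unfolding Zt_def by auto
  ultimately show "c \<cdot>\<^sub>v x \<in> Zt U t" unfolding Zt_def using xc by auto
qed

lemma BSum_Zt: "BSum U = Zt U p"
  unfolding BSum_def Zt_def by auto

lemma Yt_subspace: "subspace class_ring (Yt t) N.V"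
  unfolding N.subspace_iff
proof (intro conjI ballI allI impI)
  show "Yt t \<subseteq> carrier_vec (p*d)" unfolding Yt_def by auto
  have "\<forall>s<p. blk d s (0\<^sub>v (p*d)) = 0\<^sub>v d" using blk_zero by blast
  then show "0\<^sub>v (p*d) \<in> Yt t" unfolding Yt_def by auto
  fix x y assume x: "x \<in> Yt t" and y: "y \<in> Yt t"
  have xc: "x \<in> carrier_vec (p*d)" and yc: "y \<in> carrier_vec (p*d)" using x y unfolding Yt_def by auto
  have "blk d s (x + y) = 0\<^sub>v d" if "s < p" "s \<noteq> t" for s
    using blk_add[OF xc yc \<open>s < p\<close>] x y that unfolding Yt_def by auto
  thus "x + y \<in> Yt t" unfolding Yt_def using xc yc by auto
next
  fix c x assume x: "x \<in> Yt t"
  have xc: "x \<in> carrier_vec (p*d)" using x unfolding Yt_def by auto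
  have "blk d s (c \<cdot>\<^sub>v x) = 0\<^sub>v d" if "s < p" "s \<noteq> t" for s
    using blk_smult[OF xc \<open>s < p\<close>] x that unfolding Yt_def by auto
  thus "c \<cdot>\<^sub>v x \<in> Yt t" unfolding Yt_def using xc by auto
qed

lemma li_emb:
  assumes Bc: "B \<subseteq> carrier_vec d" and li: "D.lin_indpt B" and t: "t < p"
  shows "N.lin_indpt (emb p d t ` B)"
proof
  assume "N.lin_dep (emb p d t ` B)"
  then obtain A a w where A: "finite A" "A \<subseteq> emb p d t ` B" "N.lincomb a A = 0\<^sub>v (p*d)" "w \<in> A" "a w \<noteq> 0"
    unfolding N.lin_dep_def by auto
  define A0 where "A0 = blk d t ` A"
  have inj: "inj_on (emb p d t) (carrier_vec d)"
    by (rule inj_onI, metis blk_emb[OF t])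
  have AA0: "A = emb p d t ` A0"
  proof -
    have "x = emb p d t (blk d t x)" if xA: "x \<in> A" for x
    proof -
      obtain y where "y \<in> B" "x = emb p d t y" using xA A(2) by auto
      thus ?thesis using blk_emb[OF t, of y d t] Bc by auto
    qed
    thus ?thesis unfolding A0_def by force
  qed
  have A0B: "A0 \<subseteq> B"
  proof
    fix z assume "z \<in> A0"
    then obtain x where xA: "x \<in> A" and z: "z = blk d t x" unfolding A0_def by auto
    obtain y where "y \<in> B" "x = emb p d t y" using xA A(2) by auto
    thus "z \<in> B" using z blk_emb[OF t, of y d t] Bc by auto
  qed
  hence A0c: "A0 \<subseteq> carrier_vec d" using Bc by auto
  have injA0: "inj_on (emb p d t) A0" using inj_on_subset[OF inj A0c] .
  have Ac: "A \<subseteq> carrier_vec (p*d)" using AA0 by auto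
  have "D.lincomb (a \<circ> emb p d t) A0 = 0\<^sub>v d"
  proof (rule eq_vecI)
    show "dim_vec (D.lincomb (a \<circ> emb p d t) A0) = dim_vec (0\<^sub>v d)"
      using D.lincomb_dim[OF finite_subset[OF A0B] A0c] li D.li_fin Bc by auto
    fix k assume "k < dim_vec (0\<^sub>v d :: 'a vec)"
    hence k: "k < d" by auto
    have "0 = N.lincomb a A $ (t*d+k)" using A(3) blk_idx[OF t k] by auto
    also have "\<dots> = (\<Sum>x\<in>A. a x * x $ (t*d+k))" using N.lincomb_index[OF blk_idx(1)[OF t k] Ac] .
    also have "\<dots> = (\<Sum>y\<in>A0. a (emb p d t y) * emb p d t y $ (t*d+k))"
      unfolding AA0 by (rule sum.reindex[OF injA0, unfolded comp_def])
    also have "\<dots> = (\<Sum>y\<in>A0. (a \<circ> emb p d t) y * y $ k)"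
      using blk_idx[OF t k] by auto
    also have "\<dots> = D.lincomb (a \<circ> emb p d t) A0 $ k" using D.lincomb_index[OF k A0c] by auto
    finally show "D.lincomb (a \<circ> emb p d t) A0 $ k = 0\<^sub>v d $ k" using k by auto
  qed
  hence "(a \<circ> emb p d t) \<in> A0 \<rightarrow> {0}"
    using D.not_lindepD[OF li, of A0 "a \<circ> emb p d t"] A0B finite_subset[OF A0B] li D.li_fin Bc by auto
  moreover obtain w0 where "w0 \<in> A0" "w = emb p d t w0" using A(4) AA0 by auto
  ultimately show False using A(5) by auto
qed

lemma BSum_subspace:
  assumes U: "\<And>s. s < p \<Longrightarrow> subspace class_ring (U s) D.V"
  shows "subspace class_ring (BSum U) N.V"
  using Zt_subspace[OF U] BSum_Zt by auto

lemma BSum_dim: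
  assumes U: "\<And>s. s < p \<Longrightarrow> subspace class_ring (U s) D.V"
  shows "(\<Sum>s<p. D.sdim (U s)) \<le> N.sdim (BSum U)"
proof -
  have main: "\<exists>C. C \<subseteq> Zt U t \<and> N.lin_indpt C \<and> card C = (\<Sum>s<t. D.sdim (U s))" if "t \<le> p" for t
    using that
  proof (induction t)
    case 0
    have "N.lin_indpt {}" unfolding N.lin_dep_def by auto
    then show ?case by (intro exI[of _ "{}"]) auto
  next
    case (Suc t)
    hence t: "t < p" by auto
    obtain C where C: "C \<subseteq> Zt U t" "N.lin_indpt C" "card C = (\<Sum>s<t. D.sdim (U s))"
      using Suc by auto
    obtain B where B: "B \<subseteq> U t" "finite B" "D.lin_indpt B" "D.span B = U t" "card B = D.sdim (U t)"
      using D.basis_exists[OF U[OF t]] by auto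
    have Bc: "B \<subseteq> carrier_vec d" using B(1) D.subspace_sub[OF U[OF t]] by auto
    define E where "E = emb p d t ` B"
    have liE: "N.lin_indpt E" unfolding E_def using li_emb[OF Bc B(3) t] .
    have inj: "inj_on (emb p d t) B"
      by (rule inj_onI, metis blk_emb[OF t] Bc subsetD)
    have cE: "card E = card B" unfolding E_def using card_image[OF inj] .
    have Zc: "Zt U t \<subseteq> carrier_vec (p*d)" unfolding Zt_def by auto
    have Cc: "C \<subseteq> carrier_vec (p*d)" using C(1) Zc by auto
    have Ec: "E \<subseteq> carrier_vec (p*d)" unfolding E_def by auto
    have EY: "E \<subseteq> Yt t"
    proof
      fix v assume "v \<in> E"
      then obtain x where x: "x \<in> B" "v = emb p d t x" unfolding E_def by auto
      have "blk d s v = 0\<^sub>v d" if "s < p" "s \<noteq> t" for s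
        using blk_emb[OF that(1), of x d t] x Bc that by auto
      thus "v \<in> Yt t" unfolding Yt_def using x by auto
    qed
    have smZ: "submodule class_ring (Zt U t) N.V" using Zt_subspace[OF U] unfolding subspace_def by auto
    have smY: "submodule class_ring (Yt t) N.V" using Yt_subspace unfolding subspace_def by auto
    have s1: "N.span C \<subseteq> Zt U t" using N.span_is_subset[OF C(1) smZ] .
    have s2: "N.span E \<subseteq> Yt t" using N.span_is_subset[OF EY smY] .
    have ZY: "Zt U t \<inter> Yt t \<subseteq> {0\<^sub>v (p*d)}"
    proof
      fix v assume v: "v \<in> Zt U t \<inter> Yt t"
      have vc: "v \<in> carrier_vec (p*d)" using v unfolding Zt_def by auto
      have "blk d s v = blk d s (0\<^sub>v (p*d))" if "s < p" for s
      proof -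
        have "blk d s v = 0\<^sub>v d"
        proof (cases "s = t")
          case True thus ?thesis using v that unfolding Zt_def by auto
        next
          case False thus ?thesis using v that unfolding Yt_def by auto
        qed
        thus ?thesis using blk_zero[OF that, of d, where 'a='a] by auto
      qed
      hence "v = 0\<^sub>v (p*d)" using blocks_eq[OF vc] by auto
      thus "v \<in> {0\<^sub>v (p*d)}" by auto
    qed
    have dis: "N.span C \<inter> N.span E \<subseteq> {0\<^sub>v (p*d)}" using s1 s2 ZY by auto
    have li: "N.lin_indpt (C \<union> E)" and CE: "C \<inter> E = {}" using N.li_union[OF Cc Ec C(2) liE dis] by auto
    have fC: "finite C" using N.li_fin[OF Cc C(2)] by auto
    have fE: "finite E" unfolding E_def using B(2) by auto
    have card: "card (C \<union> E) = (\<Sum>s<Suc t. D.sdim (U s))"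
      using card_Un_disjoint[OF fC fE CE] C(3) cE B(5) by auto
    have "C \<subseteq> Zt U (Suc t)"
    proof
      fix v assume "v \<in> C"
      hence v: "v \<in> Zt U t" using C(1) by auto
      have "blk d t v = 0\<^sub>v d" using v t unfolding Zt_def by auto
      hence "blk d t v \<in> U t" using U_props(1)[OF U[OF t]] by auto
      thus "v \<in> Zt U (Suc t)" using v unfolding Zt_def using less_Suc_eq by auto
    qed
    moreover have "E \<subseteq> Zt U (Suc t)"
    proof
      fix v assume "v \<in> E"
      then obtain x where x: "x \<in> B" "v = emb p d t x" unfolding E_def by auto
      have xc: "x \<in> carrier_vec d" using x Bc by auto
      have "blk d s v \<in> U s" if "s < p" "s < Suc t" for s
      proof (cases "s = t")
        case True thus ?thesis using blk_emb[OF that(1) xc] x B(1) by auto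
      next
        case False thus ?thesis using blk_emb[OF that(1) xc] x U_props(1)[OF U[OF that(1)]] by auto
      qed
      moreover have "blk d s v = 0\<^sub>v d" if "s < p" "Suc t \<le> s" for s
        using blk_emb[OF that(1) xc] x that by auto
      ultimately show "v \<in> Zt U (Suc t)" unfolding Zt_def using x by auto
    qed
    ultimately show ?case using li card by (intro exI[of _ "C \<union> E"]) auto
  qed
  obtain C where C: "C \<subseteq> Zt U p" "N.lin_indpt C" "card C = (\<Sum>s<p. D.sdim (U s))"
    using main[of p] by auto
  have "C \<subseteq> BSum U" using C BSum_Zt by auto
  then show ?thesis using N.dim_ge(2)[OF BSum_subspace[OF U] _ C(2)] C(3) by auto
qed

end

definition orth :: "complex vec set \<Rightarrow> complex vec set \<Rightarrow> bool" where
  "orth X Y \<longleftrightarrow> (\<forall>x\<in>X. \<forall>y\<in>Y. x \<bullet>c y = 0)"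

lemma cscalar_sum: assumes "x \<in> carrier_vec n" "y \<in> carrier_vec n"
  shows "x \<bullet>c y = (\<Sum>k<n. x $ k * cnj (y $ k))"
  using assms unfolding scalar_prod_def by (auto simp: atLeast0LessThan intro!: sum.cong)

lemma orth_BSum:
  assumes "\<And>s. s < p \<Longrightarrow> orth (U s) (U' s)"
  shows "orth {v \<in> carrier_vec (p*d). \<forall>s<p. blk d s v \<in> U s} {v \<in> carrier_vec (p*d). \<forall>s<p. blk d s v \<in> U' s}"
  unfolding orth_def
proof (intro ballI)
  fix x y assume x: "x \<in> {v \<in> carrier_vec (p*d). \<forall>s<p. blk d s v \<in> U s}"
    and y: "y \<in> {v \<in> carrier_vec (p*d). \<forall>s<p. blk d s v \<in> U' s}"
  have "x \<bullet>c y = (\<Sum>k<p*d. x $ k * cnj (y $ k))" using cscalar_sum x y by auto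
  also have "\<dots> = (\<Sum>s<p. \<Sum>j<d. x $ (s*d+j) * cnj (y $ (s*d+j)))" by (rule sum_blocks)
  also have "\<dots> = (\<Sum>s<p. blk d s x \<bullet>c blk d s y)"
    by (rule sum.cong[OF refl], subst cscalar_sum[of _ d], auto)
  also have "\<dots> = 0" using assms x y unfolding orth_def by (auto intro!: sum.neutral)
  finally show "x \<bullet>c y = 0" .
qed

lemma orth_sum_left:
  assumes "X1 \<subseteq> carrier_vec n" "X2 \<subseteq> carrier_vec n" "Y \<subseteq> carrier_vec n" "orth X1 Y" "orth X2 Y"
  shows "orth ((\<lambda>(x, y). x + y) ` {(x, y). x \<in> X1 \<and> y \<in> X2}) Y"
  unfolding orth_def
proof (intro ballI)
  fix z y assume z: "z \<in> (\<lambda>(x, y). x + y) ` {(x, y). x \<in> X1 \<and> y \<in> X2}" and y: "y \<in> Y"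
  then obtain a b where ab: "a \<in> X1" "b \<in> X2" "z = a + b" by auto
  have "z \<bullet>c y = a \<bullet>c y + b \<bullet>c y"
    using ab assms y by (auto intro!: add_scalar_prod_distrib[of _ n])
  thus "z \<bullet>c y = 0" using assms ab y unfolding orth_def by auto
qed

lemma orth_sym: "X \<subseteq> carrier_vec n \<Longrightarrow> Y \<subseteq> carrier_vec n \<Longrightarrow> orth X Y \<Longrightarrow> orth Y X"
  unfolding orth_def
proof (intro ballI)
  fix x y assume XY: "X \<subseteq> carrier_vec n" "Y \<subseteq> carrier_vec n" "\<forall>x\<in>X. \<forall>y\<in>Y. x \<bullet>c y = 0" and "y \<in> Y" "x \<in> X"
  then have "x \<bullet>c y = 0" by auto
  moreover have "conjugate (x \<bullet>c y) = y \<bullet>c x"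
    using XY \<open>y \<in> Y\<close> \<open>x \<in> X\<close> by (metis conjugate_vec_sprod_comm conjugate_conjugate_sprod subsetD)
  ultimately show "y \<bullet>c x = 0" by auto
qed

lemma orth_mono: "orth X Y \<Longrightarrow> X' \<subseteq> X \<Longrightarrow> Y' \<subseteq> Y \<Longrightarrow> orth X' Y'"
  unfolding orth_def by auto

definition Coord :: "nat \<Rightarrow> nat set \<Rightarrow> complex vec set" where
  "Coord n I = {v \<in> carrier_vec n. \<forall>k<n. k \<notin> I \<longrightarrow> v $ k = 0}"

lemma orth_Coord: "I \<inter> J = {} \<Longrightarrow> orth (Coord n I) (Coord n J)"
  unfolding orth_def
proof (intro ballI)
  fix x y assume IJ: "I \<inter> J = {}" and x: "x \<in> Coord n I" and y: "y \<in> Coord n J"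
  have "x \<bullet>c y = (\<Sum>k<n. x $ k * cnj (y $ k))" using cscalar_sum x y unfolding Coord_def by auto
  also have "\<dots> = 0"
  proof (rule sum.neutral, rule ballI)
    fix k assume "k \<in> {..<n}"
    then show "x $ k * cnj (y $ k) = 0" using IJ x y unfolding Coord_def by (cases "k \<in> I") auto
  qed
  finally show "x \<bullet>c y = 0" .
qed

lemma Coord_subspace: "subspace class_ring (Coord n I) (module_vec TYPE(complex) n)"
proof -
  interpret D: vec_space "TYPE(complex)" n .
  show ?thesis unfolding D.subspace_iff Coord_def by auto
qed

lemma span_unit_Coord:
  assumes "I \<subseteq> {..<n}"
  shows "LinearCombinations.module.span class_ring (module_vec TYPE(complex) n) (unit_vec n ` I) \<subseteq> Coord n I"
proof -
  interpret D: vec_space "TYPE(complex)" n .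
  have "unit_vec n ` I \<subseteq> Coord n I" unfolding Coord_def using assms by auto
  moreover have "submodule class_ring (Coord n I) D.V" using Coord_subspace unfolding subspace_def by auto
  ultimately show ?thesis using D.span_is_subset by blast
qed

lemma mod_sum_lt: "i < p \<Longrightarrow> s < p \<Longrightarrow> (i + s) mod p = (if i + s < p then i + s else i + s - p)"
  for i s p :: nat
  by (auto simp: mod_if le_mod_geq)

lemma cd_alt: "cyc_dist p i j = min (if j \<le> i then i - j else j - i) (p - (if j \<le> i then i - j else j - i))"
proof (cases "j \<le> i")
  case True
  then have "nat \<bar>int i - int j\<bar> = i - j" by linarith
  then show ?thesis unfolding cyc_dist_def using True by simp
next
  case False
  then have "nat \<bar>int i - int j\<bar> = j - i" by linarith
  then show ?thesis unfolding cyc_dist_def using False by simp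
qed

lemma cd_ge: assumes "i < p" "j < p"
  shows "k \<le> cyc_dist p i j \<longleftrightarrow> (j \<le> i \<and> k + j \<le> i \<and> i + k \<le> p + j) \<or> (i < j \<and> k + i \<le> j \<and> j + k \<le> p + i)"
proof (cases "j \<le> i")
  case True
  then have "cyc_dist p i j = min (i - j) (p - (i - j))" unfolding cd_alt by simp
  then show ?thesis using True assms by auto
next
  case False
  then have "cyc_dist p i j = min (j - i) (p - (j - i))" unfolding cd_alt by simp
  then show ?thesis using False assms by auto
qed

lemma mod_cases: fixes i s p :: nat assumes "i < p" "s < p" obtains "(i+s) mod p = i + s" "i + s < p" | "(i+s) mod p + p = i + s" "p \<le> i + s"
proof (cases "i + s < p")
  case True
  then have "(i+s) mod p = i+s" by simp
  then show ?thesis using that(1) True by blast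
next
  case False
  then have "(i+s) mod p = i + s - p" using assms by (simp add: mod_sum_lt)
  then show ?thesis using that(2) False by linarith
qed

lemma cd_shift: assumes "i < p" "j < p" "s < p"
  shows "k \<le> cyc_dist p ((i+s) mod p) ((j+s) mod p) \<longleftrightarrow> k \<le> cyc_dist p i j"
proof -
  have p: "p > 0" using assms by auto
  have l: "(i+s) mod p < p" "(j+s) mod p < p" using p by auto
  show ?thesis unfolding cd_ge[OF l] cd_ge[OF assms(1,2)]
    apply (rule mod_cases[OF assms(1,3)]; rule mod_cases[OF assms(2,3)])
    using assms by linarith+
qed

lemma cd_step: assumes "i < p" "j < p" "1 < p" "Suc q \<le> cyc_dist p i j" shows "q \<le> cyc_dist p ((i+1) mod p) j"
proof -
  have l: "(i+1) mod p < p" using assms by auto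
  have h: "j \<le> i \<and> Suc q + j \<le> i \<and> i + Suc q \<le> p + j \<or> i < j \<and> Suc q + i \<le> j \<and> j + Suc q \<le> p + i"
    using assms(4) unfolding cd_ge[OF assms(1,2)] .
  show ?thesis unfolding cd_ge[OF l assms(2)]
    apply (rule mod_cases[OF assms(1,3)])
    using assms h by linarith+
qed

lemma cd_B: assumes "i < p" "j < p" "i \<noteq> j" "2*q \<le> p" "1 \<le> q" "q - 1 \<le> cyc_dist p i j"
  shows "q \<le> cyc_dist p i j \<or> q \<le> cyc_dist p ((i+1) mod p) j \<or> q \<le> cyc_dist p i ((j+1) mod p)"
proof -
  have l: "(i+1) mod p < p" "(j+1) mod p < p" using assms by auto
  have h: "j \<le> i \<and> q - 1 + j \<le> i \<and> i + (q - 1) \<le> p + j \<or> i < j \<and> q - 1 + i \<le> j \<and> j + (q - 1) \<le> p + i"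
    using assms(6) unfolding cd_ge[OF assms(1,2)] .
  note G = cd_ge[OF l(1) assms(2)] cd_ge[OF assms(1,2)] cd_ge[OF assms(1) l(2)]
  from h show ?thesis
  proof (elim disjE conjE)
    assume a: "j \<le> i" "q - 1 + j \<le> i" "i + (q - 1) \<le> p + j"
    show ?thesis
    proof (cases "q + j \<le> i \<and> i + q \<le> p + j")
      case True then show ?thesis unfolding G using a by auto
    next
      case False
      show ?thesis
      proof (cases "i + q \<le> p + j")
        case True
        then have iq: "i + 1 = j + q" using False a assms(3) by linarith
        show ?thesis
        proof (cases "i + 1 < p")
          case True
          then have "(i+1) mod p = i + 1" by simp
          then have "q \<le> cyc_dist p ((i+1) mod p) j" unfolding G using iq True assms by simp
          then show ?thesis by auto
        next
          case False
          then have "i + 1 = p" using assms by linarith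
          then have "(i+1) mod p = 0" by simp
          then have "q \<le> cyc_dist p ((i+1) mod p) j" unfolding G using iq \<open>i + 1 = p\<close> assms by simp
          then show ?thesis by auto
        qed
      next
        case False
        then have "(j+1) mod p = j + 1" using a assms by simp
        then have "q \<le> cyc_dist p i ((j+1) mod p)" unfolding G using a False assms by simp
        then show ?thesis by auto
      qed
    qed
  next
    assume a: "i < j" "q - 1 + i \<le> j" "j + (q - 1) \<le> p + i"
    show ?thesis
    proof (cases "q + i \<le> j \<and> j + q \<le> p + i")
      case True then show ?thesis unfolding G using a by auto
    next
      case False
      show ?thesis
      proof (cases "j + q \<le> p + i")
        case True
        then have jq: "j + 1 = i + q" using False a assms(3) by linarith
        show ?thesis
        proof (cases "j + 1 < p")
          case True
          then have "(j+1) mod p = j + 1" by simp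
          then have "q \<le> cyc_dist p i ((j+1) mod p)" unfolding G using jq True assms by simp
          then show ?thesis by auto
        next
          case False
          then have "j + 1 = p" using assms by linarith
          then have "(j+1) mod p = 0" by simp
          then have "q \<le> cyc_dist p i ((j+1) mod p)" unfolding G using jq \<open>j + 1 = p\<close> assms by simp
          then show ?thesis by auto
        qed
      next
        case False
        then have "(i+1) mod p = i + 1" using a assms by simp
        then have "q \<le> cyc_dist p ((i+1) mod p) j" unfolding G using a False assms by simp
        then show ?thesis by auto
      qed
    qed
  qed
qed

lemma cd_I: assumes "i < p" "j < p" "t < q" "t' < q" "q \<le> p" "(i+t) mod p = (j+t') mod p"
  shows "\<not> q \<le> cyc_dist p i j"
proof
  assume "q \<le> cyc_dist p i j"
  then have h: "j \<le> i \<and> q + j \<le> i \<and> i + q \<le> p + j \<or> i < j \<and> q + i \<le> j \<and> j + q \<le> p + i"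
    unfolding cd_ge[OF assms(1,2)] .
  have t: "t < p" "t' < p" using assms by auto
  show False
    apply (rule mod_cases[OF assms(1) t(1)]; rule mod_cases[OF assms(2) t(2)])
    using h assms by (elim disjE conjE; linarith)+
qed

lemma cd_self: "cyc_dist p i i = 0" unfolding cyc_dist_def by auto

lemma isd_iff: "is_subspace_of_dim d r W \<longleftrightarrow> subspace class_ring W (module_vec TYPE(complex) d) \<and> vec_space.sdim d W = r"
  unfolding is_subspace_of_dim_def vec_space.sdim_def by simp

lemma sum_rot: fixes i p :: nat assumes "i < p" shows "(\<Sum>s<p. f ((i+s) mod p)) = (\<Sum>s<p. f s)"
proof -
  have inj: "inj_on (\<lambda>s. (i+s) mod p) {..<p}"
  proof (rule inj_onI)
    fix s s' assume s: "s \<in> {..<p}" "s' \<in> {..<p}" "(i+s) mod p = (i+s') mod p"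
    hence "s < p" "s' < p" by auto
    show "s = s'"
      apply (rule mod_cases[OF assms \<open>s < p\<close>]; rule mod_cases[OF assms \<open>s' < p\<close>])
      using s(3) \<open>s < p\<close> \<open>s' < p\<close> by linarith+
  qed
  have img: "(\<lambda>s. (i+s) mod p) ` {..<p} = {..<p}"
    by (rule endo_inj_surj[OF _ _ inj]) (use assms in auto)
  have "bij_betw (\<lambda>s. (i+s) mod p) {..<p} {..<p}" using inj img unfolding bij_betw_def by auto
  thus ?thesis by (rule sum.reindex_bij_betw)
qed

lemma orth_W:
  assumes W: "\<And>u v. u < p \<Longrightarrow> v < p \<Longrightarrow> u \<noteq> v \<Longrightarrow> \<not> frac_adj p q u v \<Longrightarrow> orth (W u) (W v)"
    and uv: "u < p" "v < p" "q \<le> cyc_dist p u v" "1 \<le> q"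
  shows "orth (W u) (W v)"
proof -
  have "u \<noteq> v" using uv cd_self[of p u] by auto
  moreover have "\<not> frac_adj p q u v" unfolding frac_adj_def using uv by auto
  ultimately show ?thesis using W uv by auto
qed

lemma orth_sum_both:
  assumes c: "X1 \<subseteq> carrier_vec n" "X2 \<subseteq> carrier_vec n" "Y1 \<subseteq> carrier_vec n" "Y2 \<subseteq> carrier_vec n"
    and o: "orth X1 Y1" "orth X1 Y2" "orth X2 Y1" "orth X2 Y2"
  shows "orth ((\<lambda>(x, y). x + y) ` {(x, y). x \<in> X1 \<and> y \<in> X2}) ((\<lambda>(x, y). x + y) ` {(x, y). x \<in> Y1 \<and> y \<in> Y2})"
proof -
  have Yc: "(\<lambda>(x, y). x + y) ` {(x, y). x \<in> Y1 \<and> y \<in> Y2} \<subseteq> carrier_vec n" using c by (auto intro!: add_carrier_vec)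
  have "orth ((\<lambda>(x, y). x + y) ` {(x, y). x \<in> Y1 \<and> y \<in> Y2}) X1"
    using orth_sum_left[OF c(3,4,1)] orth_sym[OF c(1,3) o(1)] orth_sym[OF c(1,4) o(2)] by auto
  hence 1: "orth X1 ((\<lambda>(x, y). x + y) ` {(x, y). x \<in> Y1 \<and> y \<in> Y2})" using orth_sym[OF Yc c(1)] by auto
  have "orth ((\<lambda>(x, y). x + y) ` {(x, y). x \<in> Y1 \<and> y \<in> Y2}) X2"
    using orth_sum_left[OF c(3,4,2)] orth_sym[OF c(2,3) o(3)] orth_sym[OF c(2,4) o(4)] by auto
  hence 2: "orth X2 ((\<lambda>(x, y). x + y) ` {(x, y). x \<in> Y1 \<and> y \<in> Y2})" using orth_sym[OF Yc c(2)] by auto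
  show ?thesis using orth_sum_left[OF c(1,2) Yc 1 2] .
qed

lemma cd_sym: "cyc_dist p i j = cyc_dist p j i"
  unfolding cyc_dist_def by (simp add: abs_minus_commute)

lemma key:
  fixes p q d r :: nat
  assumes q2: "2 \<le> q" and pq: "2*q + 2 \<le> p"
    and hp: "\<And>d' r'. d' \<ge> 1 \<Longrightarrow> r' \<ge> 1 \<Longrightarrow> comp_proj_rep (frac_verts p) (frac_adj p (q+1)) d' r' \<Longrightarrow> real p / real (q+1) \<le> real d' / real r'"
    and hm: "\<And>d' r'. d' \<ge> 1 \<Longrightarrow> r' \<ge> 1 \<Longrightarrow> comp_proj_rep (frac_verts p) (frac_adj p (q-1)) d' r' \<Longrightarrow> real p / real (q-1) \<le> real d' / real r'"
    and rep: "comp_proj_rep (frac_verts p) (frac_adj p q) d r" and d1: "d \<ge> 1" and r1: "r \<ge> 1"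
  shows "real p / real q \<le> real d / real r"
proof -
  obtain W where Wd: "\<forall>v\<in>frac_verts p. is_subspace_of_dim d r (W v)"
    and Wo: "\<forall>u\<in>frac_verts p. \<forall>v\<in>frac_verts p. u \<noteq> v \<and> \<not> frac_adj p q u v \<longrightarrow> (\<forall>x\<in>W u. \<forall>y\<in>W v. x \<bullet>c y = 0)"
    using rep unfolding comp_proj_rep_def by blast
  interpret D: vec_space "TYPE(complex)" d .
  interpret T: two_spaces "TYPE(complex)" p d .
  have Ws: "\<And>v. v < p \<Longrightarrow> subspace class_ring (W v) D.V" and Wr: "\<And>v. v < p \<Longrightarrow> D.sdim (W v) = r"
    using Wd isd_iff unfolding frac_verts_def by auto
  have Wc: "\<And>v. v < p \<Longrightarrow> W v \<subseteq> carrier_vec d" using D.subspace_sub Ws by auto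
  have WO: "\<And>u v. u < p \<Longrightarrow> v < p \<Longrightarrow> u \<noteq> v \<Longrightarrow> \<not> frac_adj p q u v \<Longrightarrow> orth (W u) (W v)"
    using Wo unfolding orth_def frac_verts_def by auto
  define nx where "nx i = (i+1) mod p" for i
  have p1: "1 < p" using pq by auto
  have nxp: "\<And>i. nx i < p" unfolding nx_def using p1 by auto
  define A where "A i = D.subspace_sum (W i) (W (nx i))" for i
  define B where "B i = W i \<inter> W (nx i)" for i
  have A_eq: "A i = (\<lambda>(x, y). x + y) ` {(x, y). x \<in> W i \<and> y \<in> W (nx i)}" for i
    unfolding A_def D.submodule_sum_def by simp
  have As: "\<And>i. i < p \<Longrightarrow> subspace class_ring (A i) D.V" unfolding A_def using D.sum_is_subspace Ws nxp by auto
  have Bs: "\<And>i. i < p \<Longrightarrow> subspace class_ring (B i) D.V" unfolding B_def using D.subspace_inter Ws nxp by auto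
  have grass: "2*r \<le> D.sdim (A i) + D.sdim (B i)" if "i < p" for i
    using D.grassmann[OF Ws[OF that] Ws[OF nxp[of i]]] Wr[OF that] Wr[OF nxp[of i]] unfolding A_def B_def by auto
  define a where "a = (\<Sum>s<p. D.sdim (A s))"
  define b where "b = (\<Sum>s<p. D.sdim (B s))"
  have ab: "2*p*r \<le> a + b"
  proof -
    have "(\<Sum>s<p. 2*r) \<le> (\<Sum>s<p. D.sdim (A s) + D.sdim (B s))" by (rule sum_mono) (use grass in auto)
    thus ?thesis unfolding a_def b_def by (simp add: sum.distrib mult.commute mult.left_commute)
  qed
  have OW: "orth (W u) (W v)" if "u < p" "v < p" "q \<le> cyc_dist p u v" for u v
    using orth_W[of p q W, OF WO] that q2 by auto
  have Aorth: "orth (A x) (A y)" if xy: "x < p" "y < p" "q+1 \<le> cyc_dist p x y" for x y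
  proof -
    have c1: "q \<le> cyc_dist p x y" using xy by auto
    have c2: "q \<le> cyc_dist p (nx x) y" unfolding nx_def using cd_step[OF xy(1,2) p1] xy by auto
    have "q \<le> cyc_dist p (nx y) x" unfolding nx_def using cd_step[OF xy(2,1) p1] xy cd_sym[of p x y] by auto
    hence c3: "q \<le> cyc_dist p x (nx y)" using cd_sym by metis
    have c4: "q \<le> cyc_dist p (nx x) (nx y)" unfolding nx_def using cd_shift[OF xy(1,2) p1, of "q+1"] xy by auto
    show ?thesis unfolding A_eq
      by (rule orth_sum_both[OF Wc[OF xy(1)] Wc[OF nxp] Wc[OF xy(2)] Wc[OF nxp]])
         (use OW[OF xy(1,2) c1] OW[OF nxp xy(2) c2] OW[OF xy(1) nxp c3] OW[OF nxp nxp c4] in auto)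
  qed
  have Borth: "orth (B x) (B y)" if xy: "x < p" "y < p" "q-1 \<le> cyc_dist p x y" for x y
  proof -
    have "x \<noteq> y" using xy q2 cd_self[of p x] by auto
    then have "q \<le> cyc_dist p x y \<or> q \<le> cyc_dist p (nx x) y \<or> q \<le> cyc_dist p x (nx y)"
      unfolding nx_def using cd_B[OF xy(1,2) _ _ _ xy(3)] pq q2 by auto
    moreover have "B x \<subseteq> W x" "B x \<subseteq> W (nx x)" "B y \<subseteq> W y" "B y \<subseteq> W (nx y)" unfolding B_def by auto
    ultimately show ?thesis using OW[OF xy(1,2)] OW[OF nxp xy(2)] OW[OF xy(1) nxp] orth_mono by metis
  qed
  have modp: "(i+s) mod p < p" for i s using p1 by auto
  define UA where "UA i = (\<lambda>s. A ((i+s) mod p))" for i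
  define UB where "UB i = (\<lambda>s. B ((i+s) mod p))" for i
  have UAs: "subspace class_ring (UA i s) D.V" for i s unfolding UA_def using As[OF modp] by auto
  have UBs: "subspace class_ring (UB i s) D.V" for i s unfolding UB_def using Bs[OF modp] by auto
  have adim: "a \<le> T.N.sdim (T.BSum (UA i))" if "i < p" for i
    using T.BSum_dim[of "UA i", OF UAs] sum_rot[OF that, of "\<lambda>s. D.sdim (A s)"] unfolding a_def UA_def by auto
  have bdim: "b \<le> T.N.sdim (T.BSum (UB i))" if "i < p" for i
    using T.BSum_dim[of "UB i", OF UBs] sum_rot[OF that, of "\<lambda>s. D.sdim (B s)"] unfolding b_def UB_def by auto
  have "\<forall>i\<in>{..<p}. \<exists>U. subspace class_ring U T.N.V \<and> U \<subseteq> T.BSum (UA i) \<and> T.N.sdim U = a"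
    using T.N.sub_of_dim[OF T.BSum_subspace[OF UAs] adim] by auto
  from bchoice[OF this] obtain A2 where A2: "\<forall>i\<in>{..<p}. subspace class_ring (A2 i) T.N.V \<and> A2 i \<subseteq> T.BSum (UA i) \<and> T.N.sdim (A2 i) = a"
    by blast
  have "\<forall>i\<in>{..<p}. \<exists>U. subspace class_ring U T.N.V \<and> U \<subseteq> T.BSum (UB i) \<and> T.N.sdim U = b"
    using T.N.sub_of_dim[OF T.BSum_subspace[OF UBs] bdim] by auto
  from bchoice[OF this] obtain B2 where B2: "\<forall>i\<in>{..<p}. subspace class_ring (B2 i) T.N.V \<and> B2 i \<subseteq> T.BSum (UB i) \<and> T.N.sdim (B2 i) = b"
    by blast
  have pd1: "p * d \<ge> 1" using p1 d1 by auto
  have a1: "a \<ge> 1"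
  proof -
    have "W 0 \<subseteq> A 0" unfolding A_def using D.in_sum_vs[OF Ws Ws[OF nxp]] p1 by auto
    hence "D.sdim (W 0) \<le> D.sdim (A 0)" using D.sdim_mono[OF Ws As] p1 by auto
    moreover have "D.sdim (A 0) \<le> a" unfolding a_def by (rule member_le_sum) (use p1 in auto)
    ultimately show ?thesis using Wr[of 0] p1 r1 by auto
  qed
  have repA: "comp_proj_rep (frac_verts p) (frac_adj p (q+1)) (p*d) a"
    unfolding comp_proj_rep_def
  proof (intro exI[of _ A2] conjI ballI impI)
    fix v assume "v \<in> frac_verts p" then show "is_subspace_of_dim (p*d) a (A2 v)"
      using A2 isd_iff unfolding frac_verts_def by auto
  next
    fix u v x y assume u: "u \<in> frac_verts p" and v: "v \<in> frac_verts p"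
      and uv: "u \<noteq> v \<and> \<not> frac_adj p (q+1) u v" and x: "x \<in> A2 u" and y: "y \<in> A2 v"
    have up: "u < p" "v < p" using u v unfolding frac_verts_def by auto
    have cd: "q+1 \<le> cyc_dist p u v" using uv unfolding frac_adj_def by auto
    have "orth (T.BSum (UA u)) (T.BSum (UA v))"
      unfolding T.BSum_def
    proof (rule orth_BSum)
      fix s assume s: "s < p"
      show "orth (UA u s) (UA v s)" unfolding UA_def
        using Aorth[OF modp modp] cd_shift[OF up s, of "q+1"] cd by auto
    qed
    then show "x \<bullet>c y = 0" using A2 x y up unfolding orth_def by blast
  qed
  have "real p / real (q+1) \<le> real (p*d) / real a" using hp[OF pd1 a1 repA] .
  hence "real p * real a \<le> real (p*d) * real (q+1)" using a1 by (simp add: field_simps)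
  hence "real (p * a) \<le> real (p * (d * (q+1)))" by (simp add: algebra_simps)
  hence "p * a \<le> p * (d * (q+1))" by (simp only: of_nat_le_iff)
  hence aq: "a \<le> d * (q+1)" using p1 by auto
  have bq: "b \<le> d * (q-1)"
  proof (cases "b = 0")
    case True then show ?thesis by auto
  next
    case False
    then have b1: "b \<ge> 1" by auto
    have repB: "comp_proj_rep (frac_verts p) (frac_adj p (q-1)) (p*d) b"
      unfolding comp_proj_rep_def
    proof (intro exI[of _ B2] conjI ballI impI)
      fix v assume "v \<in> frac_verts p" then show "is_subspace_of_dim (p*d) b (B2 v)"
        using B2 isd_iff unfolding frac_verts_def by auto
    next
      fix u v x y assume u: "u \<in> frac_verts p" and v: "v \<in> frac_verts p"
        and uv: "u \<noteq> v \<and> \<not> frac_adj p (q-1) u v" and x: "x \<in> B2 u" and y: "y \<in> B2 v"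
      have up: "u < p" "v < p" using u v unfolding frac_verts_def by auto
      have cd: "q-1 \<le> cyc_dist p u v" using uv unfolding frac_adj_def by auto
      have "orth (T.BSum (UB u)) (T.BSum (UB v))"
        unfolding T.BSum_def
      proof (rule orth_BSum)
        fix s assume s: "s < p"
        show "orth (UB u s) (UB v s)" unfolding UB_def
          using Borth[OF modp modp] cd_shift[OF up s, of "q-1"] cd by auto
      qed
      then show "x \<bullet>c y = 0" using B2 x y up unfolding orth_def by blast
    qed
    have qm: "real (q-1) > 0" using q2 by auto
    have "real p / real (q-1) \<le> real (p*d) / real b" using hm[OF pd1 b1 repB] .
    hence "real p * real b \<le> real (p*d) * real (q-1)" using b1 qm by (simp add: field_simps)
    hence "real (p * b) \<le> real (p * (d * (q-1)))" by (simp only: of_nat_mult mult.assoc)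
    hence "p * b \<le> p * (d * (q-1))" by (simp only: of_nat_le_iff)
    thus ?thesis using p1 by auto
  qed
  have "2*p*r \<le> d * (q+1) + d * (q-1)" using ab aq bq by linarith
  also have "\<dots> = 2*q*d" using q2 by (cases q) (auto simp: algebra_simps)
  finally have "p * r \<le> q * d" by auto
  hence "real p * real r \<le> real q * real d" by (simp flip: of_nat_mult)
  thus ?thesis using q2 r1 by (simp add: field_simps)
qed

lemma upper:
  fixes p q :: nat
  assumes q1: "1 \<le> q" and qp: "q \<le> p"
  shows "comp_proj_rep (frac_verts p) (frac_adj p q) p q"
proof -
  interpret D: vec_space "TYPE(complex)" p .
  define I where "I i = (\<lambda>t. (i+t) mod p) ` {..<q}" for i
  define W where "W i = D.span (unit_vec p ` I i)" for i
  have p0: "p > 0" using q1 qp by auto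
  have Ip: "I i \<subseteq> {..<p}" for i unfolding I_def using p0 by auto
  have cI: "card (I i) = q" if i: "i < p" for i
  proof -
    have "inj_on (\<lambda>t. (i+t) mod p) {..<q}"
    proof (rule inj_onI)
      fix s s' assume s: "s \<in> {..<q}" "s' \<in> {..<q}" "(i+s) mod p = (i+s') mod p"
      hence "s < p" "s' < p" using qp by auto
      show "s = s'"
        apply (rule mod_cases[OF i \<open>s < p\<close>]; rule mod_cases[OF i \<open>s' < p\<close>])
        using s(3) \<open>s < p\<close> \<open>s' < p\<close> by linarith+
    qed
    thus ?thesis unfolding I_def using card_image by fastforce
  qed
  have injU: "inj_on (unit_vec p :: nat \<Rightarrow> complex vec) {..<p}"
  proof (rule inj_onI)
    fix x y assume xy: "x \<in> {..<p}" "y \<in> {..<p}" "(unit_vec p x :: complex vec) = unit_vec p y"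
    then have "(unit_vec p x :: complex vec) $ x = unit_vec p y $ x" by simp
    thus "x = y" using xy by (auto split: if_splits)
  qed
  have Ec: "(unit_vec p ` I i :: complex vec set) \<subseteq> carrier_vec p" for i using Ip by auto
  have Eli: "D.lin_indpt (unit_vec p ` I i)" for i
  proof -
    have "D.lin_indpt (set (unit_vecs p))" using D.unit_vecs_basis unfolding D.basis_def by auto
    moreover have "unit_vec p ` I i \<subseteq> set (unit_vecs p)"
      using Ip[of i] unfolding unit_vecs_def by (auto simp: atLeast0LessThan)
    ultimately show ?thesis using D.subset_li_is_li by blast
  qed
  have cE: "card (unit_vec p ` I i :: complex vec set) = q" if "i < p" for i
    using card_image[OF inj_on_subset[OF injU Ip[of i]]] cI[OF that] by auto
  show ?thesis unfolding comp_proj_rep_def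
  proof (intro exI[of _ W] conjI ballI impI)
    fix v assume "v \<in> frac_verts p"
    hence v: "v < p" unfolding frac_verts_def by auto
    show "is_subspace_of_dim p q (W v)" unfolding isd_iff W_def
      using D.span_is_subspace[OF Ec] D.dim_span[OF Ec Eli] cE[OF v] unfolding D.sdim_def by auto
  next
    fix u v x y assume u: "u \<in> frac_verts p" and v: "v \<in> frac_verts p"
      and uv: "u \<noteq> v \<and> \<not> frac_adj p q u v" and x: "x \<in> W u" and y: "y \<in> W v"
    have up: "u < p" "v < p" using u v unfolding frac_verts_def by auto
    have cd: "q \<le> cyc_dist p u v" using uv unfolding frac_adj_def by auto
    have "I u \<inter> I v = {}"
    proof (rule ccontr)
      assume "I u \<inter> I v \<noteq> {}"
      then obtain t t' where "t < q" "t' < q" "(u+t) mod p = (v+t') mod p" unfolding I_def by auto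
      thus False using cd_I[OF up] qp cd by blast
    qed
    hence "orth (Coord p (I u)) (Coord p (I v))" by (rule orth_Coord)
    moreover have "W u \<subseteq> Coord p (I u)" "W v \<subseteq> Coord p (I v)" unfolding W_def using span_unit_Coord Ip by auto
    ultimately show "x \<bullet>c y = 0" using x y unfolding orth_def by blast
  qed
qed

theorem lemma17:
  fixes p q :: nat
  assumes "2 \<le> q" and "real q \<le> real p / 2 - 1"
    and "xi_f_bar (frac_verts p) (frac_adj p (q - 1)) = real p / real (q - 1)"
    and "xi_f_bar (frac_verts p) (frac_adj p (q + 1)) = real p / real (q + 1)"
  shows "xi_f_bar (frac_verts p) (frac_adj p q) = real p / real q"
proof -
  define S where "S k = {real d / real r | d r. d \<ge> 1 \<and> r \<ge> 1 \<and> comp_proj_rep (frac_verts p) (frac_adj p k) d r}" for k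
  have xi: "xi_f_bar (frac_verts p) (frac_adj p k) = Inf (S k)" for k unfolding xi_f_bar_def S_def by simp
  have bdd: "bdd_below (S k)" for k unfolding S_def by (rule bdd_belowI[of _ 0]) auto
  have lb: "xi_f_bar (frac_verts p) (frac_adj p k) \<le> real d / real r"
    if "d \<ge> 1" "r \<ge> 1" "comp_proj_rep (frac_verts p) (frac_adj p k) d r" for k d r
  proof -
    have "real d / real r \<in> S k" unfolding S_def using that by blast
    thus ?thesis unfolding xi using cInf_lower[OF _ bdd] by auto
  qed
  have pq: "2*q + 2 \<le> p"
  proof -
    have "real (2*q+2) \<le> real p" using assms(2) by simp
    thus ?thesis by (simp only: of_nat_le_iff)
  qed
  have hp: "real p / real (q+1) \<le> real d' / real r'"
    if "d' \<ge> 1" "r' \<ge> 1" "comp_proj_rep (frac_verts p) (frac_adj p (q+1)) d' r'" for d' r'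
    using lb[OF that] assms(4) by simp
  have hm: "real p / real (q-1) \<le> real d' / real r'"
    if "d' \<ge> 1" "r' \<ge> 1" "comp_proj_rep (frac_verts p) (frac_adj p (q-1)) d' r'" for d' r'
    using lb[OF that] assms(3) by simp
  have mem: "real p / real q \<in> S q" unfolding S_def using upper[of q p] assms(1) pq by force
  have "Inf (S q) \<le> real p / real q" using cInf_lower[OF mem bdd] .
  moreover have "real p / real q \<le> Inf (S q)"
  proof (rule cInf_greatest)
    show "S q \<noteq> {}" using mem by auto
    fix x assume "x \<in> S q"
    then obtain d r where "x = real d / real r" "d \<ge> 1" "r \<ge> 1" "comp_proj_rep (frac_verts p) (frac_adj p q) d r"
      unfolding S_def by auto
    thus "real p / real q \<le> x" using key[OF assms(1) pq hp hm] by auto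
  qed
  ultimately show ?thesis unfolding xi by auto
qed

end
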